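(* Let $\kappa$ and $\lambda$ be infinite cardinals with $cf(\kappa)\leq\lambda<\kappa$. Let $\mathbb{W}=\{-1\}\cup\kappa$, ordered by declaring $-1$ smaller than every ordinal and ordering $\kappa$ as ordinals. Let $X=\{f\in\mathbb{W}^{\lambda^+}: supp(f)<\lambda^+\}$, where $supp(f)=\min\{\gamma<\lambda^+: f(\alpha)=0 \text{ for every } \alpha\geq\gamma\}$, with the order topology of the lexicographic order. Then $X$ is a strong Choquet (hence Baire), non-archimedean (hence hereditarily paracompact) LOTS, and $dis(X)\leq\lambda^+<\kappa<\Delta(X)$.
   Context: A LOTS is a linearly ordered set with its order topology. A space is non-archimedean if it has a base such that any two elements are either disjoint or one contains the other. A space is strong Choquet if player II has a winning strategy in the strong Choquet game (player I plays an open set $B_n$ and a point $f_n\in B_n$, with $B_n\subseteq A_{n-1}$; player II plays an open $A_n$ with $f_n\in A_n\subseteq B_n$; II wins if $\bigcap_n A_n\neq\emptyset$). $dis(X)$ is the least number of discrete subspaces needed to cover $X$; $\Delta(X)$ is the least cardinality of a non-empty open subset of $X$. *)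

theory Defs
  imports "HOL-Analysis.Analysis"
begin

definition cofinal_in :: "'a rel \<Rightarrow> 'a set \<Rightarrow> bool" where
  "cofinal_in k S \<longleftrightarrow> S \<subseteq> Field k \<and> (\<forall>a\<in>Field k. \<exists>b\<in>S. (a, b) \<in> k)"

definition cf_le :: "'a rel \<Rightarrow> 'b set \<Rightarrow> bool" where
  "cf_le k A \<longleftrightarrow> (\<exists>S. cofinal_in k S \<and> (card_of S, card_of A) \<in> ordLeq)"

text \<open>None plays the role of -1, Some a for an ordinal a < kappa.\<close>
definition W_less :: "'a rel \<Rightarrow> 'a option \<Rightarrow> 'a option \<Rightarrow> bool" where
  "W_less k x y \<longleftrightarrow>
     (case (x, y) of
        (None, Some b) \<Rightarrow> True
      | (Some a, Some b) \<Rightarrow> (a, b) \<in> k \<and> a \<noteq> b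
      | _ \<Rightarrow> False)"

definition W_set :: "'a rel \<Rightarrow> 'a option set" where
  "W_set k = insert None (Some ` Field k)"

definition ord_zero :: "'a rel \<Rightarrow> 'a" where
  "ord_zero k = wo_rel.minim k (Field k)"

text \<open>X = {f \<in> W^(L) : supp f < L}, where L is a well-order (used with L = lambda^+).
  Functions are extensional: value None outside Field L.  supp f < L means that there is
  gamma < L with f alpha = 0 for all alpha >= gamma.\<close>
definition Xspace :: "'a rel \<Rightarrow> 'i rel \<Rightarrow> ('i \<Rightarrow> 'a option) set" where
  "Xspace k L = {f. (\<forall>\<alpha>\<in>Field L. f \<alpha> \<in> W_set k) \<and> (\<forall>\<alpha>. \<alpha> \<notin> Field L \<longrightarrow> f \<alpha> = None)
      \<and> (\<exists>\<gamma>\<in>Field L. \<forall>\<alpha>\<in>Field L. (\<gamma>, \<alpha>) \<in> L \<longrightarrow> f \<alpha> = Some (ord_zero k))}"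

definition lex_less :: "'a rel \<Rightarrow> 'i rel \<Rightarrow> ('i \<Rightarrow> 'a option) \<Rightarrow> ('i \<Rightarrow> 'a option) \<Rightarrow> bool" where
  "lex_less k L f g \<longleftrightarrow>
     (\<exists>\<alpha>\<in>Field L. W_less k (f \<alpha>) (g \<alpha>) \<and> (\<forall>\<beta>. (\<beta>, \<alpha>) \<in> L \<and> \<beta> \<noteq> \<alpha> \<longrightarrow> f \<beta> = g \<beta>))"

definition strict_linear_on :: "'x set \<Rightarrow> ('x \<Rightarrow> 'x \<Rightarrow> bool) \<Rightarrow> bool" where
  "strict_linear_on S lt \<longleftrightarrow>
     (\<forall>x\<in>S. \<not> lt x x) \<and>
     (\<forall>x\<in>S. \<forall>y\<in>S. \<forall>z\<in>S. lt x y \<and> lt y z \<longrightarrow> lt x z) \<and>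
     (\<forall>x\<in>S. \<forall>y\<in>S. x = y \<or> lt x y \<or> lt y x)"

text \<open>Order topology on S: generated by the open rays (and S itself, so the topspace is S).\<close>
definition order_topology_on :: "'x set \<Rightarrow> ('x \<Rightarrow> 'x \<Rightarrow> bool) \<Rightarrow> 'x topology" where
  "order_topology_on S lt = topology_generated_by
     (insert S ({{y\<in>S. lt y a} | a. a \<in> S} \<union> {{y\<in>S. lt a y} | a. a \<in> S}))"

text \<open>Strong Choquet game. A strategy for player II maps the history of I's moves
  [(B_0,f_0),...,(B_n,f_n)] to II's answer A_n (II's own earlier moves are determined
  by the strategy).\<close>
definition choquet_answer ::
    "(('x set \<times> 'x) list \<Rightarrow> 'x set) \<Rightarrow> (nat \<Rightarrow> 'x set) \<Rightarrow> (nat \<Rightarrow> 'x) \<Rightarrow> nat \<Rightarrow> 'x set" where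
  "choquet_answer \<sigma> B f n = \<sigma> (map (\<lambda>i. (B i, f i)) [0..<Suc n])"

definition choquet_I_legal_upto ::
    "'x topology \<Rightarrow> (('x set \<times> 'x) list \<Rightarrow> 'x set) \<Rightarrow> (nat \<Rightarrow> 'x set) \<Rightarrow> (nat \<Rightarrow> 'x) \<Rightarrow> nat \<Rightarrow> bool" where
  "choquet_I_legal_upto T \<sigma> B f n \<longleftrightarrow>
     (\<forall>i\<le>n. openin T (B i) \<and> f i \<in> B i \<and>
              (0 < i \<longrightarrow> B i \<subseteq> choquet_answer \<sigma> B f (i - 1)))"

definition strong_choquet :: "'x topology \<Rightarrow> bool" where
  "strong_choquet T \<longleftrightarrow> (\<exists>\<sigma>.
     (\<forall>B f n. choquet_I_legal_upto T \<sigma> B f n \<longrightarrow>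
        openin T (choquet_answer \<sigma> B f n) \<and> f n \<in> choquet_answer \<sigma> B f n \<and>
        choquet_answer \<sigma> B f n \<subseteq> B n) \<and>
     (\<forall>B f. (\<forall>n. choquet_I_legal_upto T \<sigma> B f n) \<longrightarrow>
        (\<Inter>n. choquet_answer \<sigma> B f n) \<noteq> {}))"

definition is_base_of :: "'x topology \<Rightarrow> 'x set set \<Rightarrow> bool" where
  "is_base_of T \<B> \<longleftrightarrow> (\<forall>U\<in>\<B>. openin T U) \<and>
     (\<forall>U. openin T U \<longrightarrow> (\<exists>\<U>\<subseteq>\<B>. U = \<Union>\<U>))"

definition non_archimedean :: "'x topology \<Rightarrow> bool" where
  "non_archimedean T \<longleftrightarrow> (\<exists>\<B>. is_base_of T \<B> \<and>
     (\<forall>U\<in>\<B>. \<forall>V\<in>\<B>. U \<inter> V = {} \<or> U \<subseteq> V \<or> V \<subseteq> U))"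

definition dense_in :: "'x topology \<Rightarrow> 'x set \<Rightarrow> bool" where
  "dense_in T D \<longleftrightarrow> D \<subseteq> topspace T \<and> T closure_of D = topspace T"

definition baire_space :: "'x topology \<Rightarrow> bool" where
  "baire_space T \<longleftrightarrow> (\<forall>U :: nat \<Rightarrow> 'x set.
     (\<forall>n. openin T (U n) \<and> dense_in T (U n)) \<longrightarrow> dense_in T (\<Inter>n. U n) \<or> topspace T = {})"

definition paracompact_space :: "'x topology \<Rightarrow> bool" where
  "paracompact_space T \<longleftrightarrow> (\<forall>\<C>. (\<forall>C\<in>\<C>. openin T C) \<and> \<Union>\<C> = topspace T \<longrightarrow>
     (\<exists>\<D>. (\<forall>D\<in>\<D>. openin T D \<and> (\<exists>C\<in>\<C>. D \<subseteq> C)) \<and> \<Union>\<D> = topspace T \<and>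
          locally_finite_in T \<D>))"

definition hereditarily_paracompact :: "'x topology \<Rightarrow> bool" where
  "hereditarily_paracompact T \<longleftrightarrow>
     (\<forall>S. S \<subseteq> topspace T \<longrightarrow> paracompact_space (subtopology T S))"

definition dis_le :: "'x topology \<Rightarrow> 'b set \<Rightarrow> bool" where
  "dis_le T A \<longleftrightarrow> (\<exists>\<D>. \<Union>\<D> = topspace T \<and>
     (\<forall>D\<in>\<D>. D \<subseteq> topspace T \<and> subtopology T D = discrete_topology D) \<and> (card_of \<D>, card_of A) \<in> ordLeq)"

definition Delta_gt :: "'x topology \<Rightarrow> 'b set \<Rightarrow> bool" where
  "Delta_gt T A \<longleftrightarrow> (\<forall>U. openin T U \<and> U \<noteq> {} \<longrightarrow> (card_of A, card_of U) \<in> ordLess)"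

end

theory Submission
  imports Defs
begin

unbundle cardinal_syntax



lemma under_insert: "Refl r \<Longrightarrow> t \<in> Field r \<Longrightarrow> under r t = insert t (underS r t)"
  unfolding under_def underS_def refl_on_def by auto

lemma small_le_Field:
  assumes l: "Card_order l" "infinite (Field l)" and A: "|A| <o cardSuc l"
  shows "|A| \<le>o |Field l|"
proof -
  have "|A| \<le>o l" using A cardSuc_ordLeq_ordLess[OF l(1) card_of_Card_order] by blast
  moreover have "l =o |Field l|" using card_of_Field_ordIso[OF l(1)] ordIso_symmetric by blast
  ultimately show ?thesis using ordLeq_ordIso_trans by blast
qed

lemma under_small:
  assumes l: "Card_order l" "infinite (Field l)" and t: "t \<in> Field (cardSuc l)"
  shows "|under (cardSuc l) t| \<le>o |Field l|"
proof -
  have C: "Card_order (cardSuc l)" using cardSuc_Card_order l(1) by blast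
  hence W: "Well_order (cardSuc l)" unfolding card_order_on_def by blast
  hence R: "Refl (cardSuc l)" by (simp add: order_on_defs)
  have "|underS (cardSuc l) t| <o cardSuc l" using card_of_underS[OF C t] .
  hence 1: "|underS (cardSuc l) t| \<le>o |Field l|" using small_le_Field[OF l] by blast
  have 2: "|{t}| \<le>o |Field l|" using l(2)
    by (metis card_of_singl_ordLeq finite.emptyI)
  have "|{t} \<union> underS (cardSuc l) t| \<le>o |Field l|"
    using card_of_Un_ordLeq_infinite_Field[of "|Field l|", OF _ _ _ card_of_Card_order] 1 2 l(2)
    by (simp add: Field_card_of del: Un_insert_left)
  thus ?thesis using under_insert[OF R t] by simp
qed

lemma cover_small:
  assumes l: "infinite (Field l)" and T: "|T| \<le>o |Field l|"
    and U: "\<forall>t\<in>T. |A t| \<le>o |Field l|" and cov: "F \<subseteq> (\<Union>t\<in>T. A t)"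
  shows "|F| \<le>o |Field l|"
proof -
  have "|\<Union>t\<in>T. A t| \<le>o |Field l|" using card_of_UNION_ordLeq_infinite[OF l T U] .
  thus ?thesis using card_of_mono1[OF cov] ordLeq_transitive by blast
qed

lemma Field_cardSuc_big:
  assumes l: "Card_order l"
  shows "\<not> |Field (cardSuc l)| \<le>o |Field l|"
proof
  assume a: "|Field (cardSuc l)| \<le>o |Field l|"
  have C: "Card_order (cardSuc l)" using cardSuc_Card_order l by blast
  have "cardSuc l =o |Field (cardSuc l)|" using card_of_Field_ordIso[OF C] ordIso_symmetric by blast
  moreover have "|Field l| =o l" using card_of_Field_ordIso[OF l] .
  ultimately have "cardSuc l \<le>o l" using a ordIso_ordLeq_trans ordLeq_ordIso_trans by blast
  thus False using cardSuc_greater[OF l] not_ordLess_ordLeq by blast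
qed

lemma bounded_small:
  assumes l: "Card_order l" "infinite (Field l)" and T: "T \<subseteq> Field (cardSuc l)" "|T| \<le>o |Field l|"
  shows "\<exists>\<eta>\<in>Field (cardSuc l). \<forall>t\<in>T. (t,\<eta>) \<in> cardSuc l \<and> t \<noteq> \<eta>"
proof (rule ccontr)
  assume n: "\<not> ?thesis"
  have C: "Card_order (cardSuc l)" using cardSuc_Card_order l(1) by blast
  hence W: "Well_order (cardSuc l)" unfolding card_order_on_def by blast
  hence R: "Refl (cardSuc l)" and Tot: "Total (cardSuc l)" by (simp_all add: order_on_defs)
  have "Field (cardSuc l) \<subseteq> (\<Union>t\<in>T. under (cardSuc l) t)"
  proof
    fix x assume x: "x \<in> Field (cardSuc l)"
    then obtain t where t: "t \<in> T" "\<not> ((t,x) \<in> cardSuc l \<and> t \<noteq> x)" using n by blast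
    have "(x,t) \<in> cardSuc l"
    proof (cases "t = x")
      case True thus ?thesis using R x unfolding refl_on_def by blast
    next
      case False thus ?thesis using Tot x t T unfolding total_on_def by blast
    qed
    thus "x \<in> (\<Union>t\<in>T. under (cardSuc l) t)" using t unfolding under_def by blast
  qed
  hence "|Field (cardSuc l)| \<le>o |Field l|"
    using cover_small[OF l(2) T(2)] under_small[OF l] T(1) by blast
  thus False using Field_cardSuc_big[OF l(1)] by blast
qed

lemma cardSuc_less:
  assumes k: "Card_order k" and l: "Card_order l" "infinite (Field l)"
    and cf: "cf_le k (Field l)" and lk: "l <o k"
  shows "cardSuc l <o k"
proof -
  have le: "cardSuc l \<le>o k" using cardSuc_least[OF l(1) k lk] .
  { assume iso: "cardSuc l =o k"
    obtain S where S: "cofinal_in k S" "|S| \<le>o |Field l|" using cf unfolding cf_le_def by blast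
    have Wk: "Well_order k" using k unfolding card_order_on_def by blast
    have Rk: "Refl k" using Wk by (simp add: order_on_defs)
    have "\<forall>t\<in>S. |under k t| \<le>o |Field l|"
    proof
      fix t assume t: "t \<in> S"
      hence tF: "t \<in> Field k" using S(1) unfolding cofinal_in_def by blast
      have "|underS k t| <o k" using card_of_underS[OF k tF] .
      hence "|underS k t| <o cardSuc l" using iso ordLess_ordIso_trans ordIso_symmetric by blast
      hence 1: "|underS k t| \<le>o |Field l|" using small_le_Field[OF l] by blast
      have 2: "|{t}| \<le>o |Field l|" using l(2)
        by (metis card_of_singl_ordLeq finite.emptyI)
      have "|{t} \<union> underS k t| \<le>o |Field l|"
        using card_of_Un_ordLeq_infinite_Field[of "|Field l|", OF _ _ _ card_of_Card_order] 1 2 l(2)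
        by (simp add: Field_card_of del: Un_insert_left)
      thus "|under k t| \<le>o |Field l|" using under_insert[OF Rk tF] by simp
    qed
    moreover have "Field k \<subseteq> (\<Union>t\<in>S. under k t)"
      using S(1) unfolding cofinal_in_def under_def by blast
    ultimately have a: "|Field k| \<le>o |Field l|" using cover_small[OF l(2) S(2)] by blast
    have "k =o |Field k|" using card_of_Field_ordIso[OF k] ordIso_symmetric by blast
    moreover have "|Field l| =o l" using card_of_Field_ordIso[OF l(1)] .
    ultimately have "k \<le>o l" using a ordIso_ordLeq_trans ordLeq_ordIso_trans by blast
    hence False using lk not_ordLess_ordLeq by blast }
  thus ?thesis using le ordLeq_iff_ordLess_or_ordIso by blast
qed


lemma WO_refl: "Well_order r \<Longrightarrow> a \<in> Field r \<Longrightarrow> (a,a) \<in> r"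
  by (simp add: order_on_defs refl_on_def)
lemma WO_trans: "Well_order r \<Longrightarrow> (a,b) \<in> r \<Longrightarrow> (b,c) \<in> r \<Longrightarrow> (a,c) \<in> r"
  unfolding order_on_defs trans_def by blast
lemma WO_anti: "Well_order r \<Longrightarrow> (a,b) \<in> r \<Longrightarrow> (b,a) \<in> r \<Longrightarrow> a = b"
  unfolding order_on_defs antisym_def by blast
lemma WO_tot: "Well_order r \<Longrightarrow> a \<in> Field r \<Longrightarrow> b \<in> Field r \<Longrightarrow> (a,b) \<in> r \<or> (b,a) \<in> r"
  using wo_rel.TOTALS[of r] unfolding wo_rel_def by blast
lemma WO_min: "Well_order r \<Longrightarrow> B \<subseteq> Field r \<Longrightarrow> B \<noteq> {} \<Longrightarrow> \<exists>m\<in>B. \<forall>b\<in>B. (m,b) \<in> r"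
proof -
  assume a: "Well_order r" "B \<subseteq> Field r" "B \<noteq> {}"
  have w: "wo_rel r" using a(1) unfolding wo_rel_def .
  show ?thesis using wo_rel.minim_in[OF w a(2,3)] wo_rel.minim_least[OF w a(2)] by blast
qed

lemma W_irrefl: "\<not> W_less k x x"
  unfolding W_less_def by (cases x) auto


lemma W_less_simps[simp]:
  "W_less k None y \<longleftrightarrow> y \<noteq> None"
  "W_less k x None \<longleftrightarrow> False"
  "W_less k (Some a) (Some b) \<longleftrightarrow> (a,b) \<in> k \<and> a \<noteq> b"
  unfolding W_less_def by (auto split: option.splits)

lemma W_trans: assumes "Well_order k" "W_less k x y" "W_less k y z" shows "W_less k x z"
proof (cases x)
  case None thus ?thesis using assms(3) by (cases z) auto
next
  case (Some a)
  obtain b where b: "y = Some b" using assms(2) by (cases y) auto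
  obtain c where c: "z = Some c" using assms(3) by (cases z) auto
  have ab: "(a,b) \<in> k" "a \<noteq> b" using assms(2) Some b by auto
  have bc: "(b,c) \<in> k" "b \<noteq> c" using assms(3) c b by auto
  have "(a,c) \<in> k" using WO_trans[OF assms(1) ab(1) bc(1)] .
  moreover have "a \<noteq> c"
  proof
    assume "a = c" thus False using WO_anti[OF assms(1) ab(1)] bc ab by simp
  qed
  ultimately show ?thesis using Some c by simp
qed

lemma W_total: assumes "Well_order k" "x \<in> W_set k" "y \<in> W_set k" "x \<noteq> y"
  shows "W_less k x y \<or> W_less k y x"
proof (cases x)
  case None thus ?thesis using assms(4) by simp
next
  case (Some a)
  show ?thesis
  proof (cases y)
    case None thus ?thesis using Some by simp
  next
    case (Some b)
    have "a \<in> Field k" "b \<in> Field k" using assms(2,3) \<open>x = Some a\<close> Some unfolding W_set_def by auto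
    hence "(a,b) \<in> k \<or> (b,a) \<in> k" using WO_tot[OF assms(1)] by blast
    moreover have "a \<noteq> b" using assms(4) \<open>x = Some a\<close> Some by simp
    ultimately show ?thesis using \<open>x = Some a\<close> Some by auto
  qed
qed

lemma W_None: "W_less k None (Some a)" unfolding W_less_def by simp

locale LX =
  fixes k :: "'a rel" and L :: "'i rel"
  assumes kC: "Card_order k" and kinf: "infinite (Field k)"
  and LW: "Well_order L"
  and Lbnd: "\<And>T. T \<subseteq> Field L \<Longrightarrow> countable T \<Longrightarrow> \<exists>\<eta>\<in>Field L. \<forall>t\<in>T. (t,\<eta>) \<in> L \<and> t \<noteq> \<eta>"
  and Lne: "Field L \<noteq> {}"
begin

abbreviation "X \<equiv> Xspace k L"
abbreviation "lt \<equiv> lex_less k L"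
abbreviation "z \<equiv> ord_zero k"

lemma kW: "Well_order k" using kC unfolding card_order_on_def by blast

lemma z_in: "z \<in> Field k" and z_least: "a \<in> Field k \<Longrightarrow> (z,a) \<in> k"
proof -
  have ne: "Field k \<noteq> {}" using kinf by auto
  show "z \<in> Field k" unfolding ord_zero_def using wo_rel.minim_in[of k "Field k"] kW ne
    unfolding wo_rel_def by blast
  show "a \<in> Field k \<Longrightarrow> (z,a) \<in> k" unfolding ord_zero_def using wo_rel.minim_least[of k "Field k"] kW
    unfolding wo_rel_def by blast
qed

lemma one_ex: "\<exists>c\<in>Field k. W_less k (Some z) (Some c)"
proof -
  have "Field k \<noteq> {z}" using kinf by auto
  then obtain c where "c \<in> Field k" "c \<noteq> z" using z_in by blast
  moreover have "W_less k (Some z) (Some c)" using z_least[OF \<open>c \<in> Field k\<close>] \<open>c \<noteq> z\<close> by simp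
  ultimately show ?thesis by blast
qed

lemma noMax: "x \<in> Field L \<Longrightarrow> \<exists>y\<in>Field L. (x,y) \<in> L \<and> x \<noteq> y"
  using Lbnd[of "{x}"] by auto

lemma noMax2: "x \<in> Field L \<Longrightarrow> y \<in> Field L \<Longrightarrow> \<exists>w\<in>Field L. (x,w) \<in> L \<and> x \<noteq> w \<and> (y,w) \<in> L \<and> y \<noteq> w"
  using Lbnd[of "{x,y}"] by auto

lemma XD1: "f \<in> X \<Longrightarrow> \<alpha> \<in> Field L \<Longrightarrow> f \<alpha> \<in> W_set k"
  unfolding Xspace_def by blast
lemma XD2: "f \<in> X \<Longrightarrow> \<alpha> \<notin> Field L \<Longrightarrow> f \<alpha> = None"
  unfolding Xspace_def by blast
lemma XD3: "f \<in> X \<Longrightarrow> \<exists>\<gamma>\<in>Field L. \<forall>\<alpha>\<in>Field L. (\<gamma>, \<alpha>) \<in> L \<longrightarrow> f \<alpha> = Some z"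
  unfolding Xspace_def by blast

lemma lt_irrefl: "\<not> lt f f"
  unfolding lex_less_def using W_irrefl by blast

lemma L_lt_le: "(\<gamma>,\<alpha>) \<in> L \<Longrightarrow> \<gamma> \<noteq> \<alpha> \<Longrightarrow> (\<alpha>,\<beta>) \<in> L \<Longrightarrow> (\<gamma>,\<beta>) \<in> L \<and> \<gamma> \<noteq> \<beta>"
proof
  assume 1: "(\<gamma>,\<alpha>) \<in> L" "\<gamma> \<noteq> \<alpha>" "(\<alpha>,\<beta>) \<in> L"
  show "(\<gamma>,\<beta>) \<in> L" using WO_trans[OF LW 1(1) 1(3)] .
  show "\<gamma> \<noteq> \<beta>"
  proof
    assume "\<gamma> = \<beta>" thus False using WO_anti[OF LW 1(1)] 1 by simp
  qed
qed

lemma L_le_lt: "(\<gamma>,\<alpha>) \<in> L \<Longrightarrow> (\<alpha>,\<beta>) \<in> L \<Longrightarrow> \<alpha> \<noteq> \<beta> \<Longrightarrow> (\<gamma>,\<beta>) \<in> L \<and> \<gamma> \<noteq> \<beta>"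
proof
  assume 1: "(\<gamma>,\<alpha>) \<in> L" "(\<alpha>,\<beta>) \<in> L" "\<alpha> \<noteq> \<beta>"
  show "(\<gamma>,\<beta>) \<in> L" using WO_trans[OF LW 1(1) 1(2)] .
  show "\<gamma> \<noteq> \<beta>"
  proof
    assume "\<gamma> = \<beta>" thus False using WO_anti[OF LW 1(2)] 1 by simp
  qed
qed

lemma lt_trans:
  assumes f: "f \<in> X" and g: "g \<in> X" and h: "h \<in> X" and fg: "lt f g" and gh: "lt g h"
  shows "lt f h"
proof -
  obtain \<alpha> where a: "\<alpha> \<in> Field L" "W_less k (f \<alpha>) (g \<alpha>)"
    "\<forall>\<beta>. (\<beta>, \<alpha>) \<in> L \<and> \<beta> \<noteq> \<alpha> \<longrightarrow> f \<beta> = g \<beta>" using fg unfolding lex_less_def by blast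
  obtain \<beta> where b: "\<beta> \<in> Field L" "W_less k (g \<beta>) (h \<beta>)"
    "\<forall>\<gamma>. (\<gamma>, \<beta>) \<in> L \<and> \<gamma> \<noteq> \<beta> \<longrightarrow> g \<gamma> = h \<gamma>" using gh unfolding lex_less_def by blast
  show ?thesis
  proof (cases "\<alpha> = \<beta>")
    case True
    have 1: "W_less k (f \<alpha>) (h \<alpha>)" using W_trans[OF kW a(2)] b(2) True by simp
    have 2: "\<forall>\<gamma>. (\<gamma>,\<alpha>) \<in> L \<and> \<gamma> \<noteq> \<alpha> \<longrightarrow> f \<gamma> = h \<gamma>" using a(3) b(3) True by simp
    show ?thesis unfolding lex_less_def using a(1) 1 2 by blast
  next
    case ne: False
    from WO_tot[OF LW a(1) b(1)] show ?thesis
    proof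
      assume ab: "(\<alpha>,\<beta>) \<in> L"
      have "g \<alpha> = h \<alpha>" using b(3) ab ne by blast
      hence 1: "W_less k (f \<alpha>) (h \<alpha>)" using a(2) by simp
      have 2: "\<forall>\<gamma>. (\<gamma>,\<alpha>) \<in> L \<and> \<gamma> \<noteq> \<alpha> \<longrightarrow> f \<gamma> = h \<gamma>"
      proof (intro allI impI)
        fix \<gamma> assume c: "(\<gamma>, \<alpha>) \<in> L \<and> \<gamma> \<noteq> \<alpha>"
        hence "(\<gamma>,\<beta>) \<in> L \<and> \<gamma> \<noteq> \<beta>" using L_lt_le ab by blast
        thus "f \<gamma> = h \<gamma>" using a(3) b(3) c by simp
      qed
      show ?thesis unfolding lex_less_def using a(1) 1 2 by blast
    next
      assume ba: "(\<beta>,\<alpha>) \<in> L"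
      have "f \<beta> = g \<beta>" using a(3) ba ne by blast
      hence 1: "W_less k (f \<beta>) (h \<beta>)" using b(2) by simp
      have 2: "\<forall>\<gamma>. (\<gamma>,\<beta>) \<in> L \<and> \<gamma> \<noteq> \<beta> \<longrightarrow> f \<gamma> = h \<gamma>"
      proof (intro allI impI)
        fix \<gamma> assume c: "(\<gamma>, \<beta>) \<in> L \<and> \<gamma> \<noteq> \<beta>"
        hence "(\<gamma>,\<alpha>) \<in> L \<and> \<gamma> \<noteq> \<alpha>" using L_lt_le ba by blast
        thus "f \<gamma> = h \<gamma>" using a(3) b(3) c by simp
      qed
      show ?thesis unfolding lex_less_def using b(1) 1 2 by blast
    qed
  qed
qed

lemma lt_total:
  assumes f: "f \<in> X" and g: "g \<in> X" and ne: "f \<noteq> g"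
  shows "lt f g \<or> lt g f"
proof -
  define D where "D = {\<xi>\<in>Field L. f \<xi> \<noteq> g \<xi>}"
  obtain \<xi> where xi: "f \<xi> \<noteq> g \<xi>" using ne by blast
  have "\<xi> \<in> Field L"
  proof (rule ccontr)
    assume "\<xi> \<notin> Field L"
    hence "f \<xi> = None" "g \<xi> = None" using XD2[OF f] XD2[OF g] by auto
    thus False using xi by simp
  qed
  hence "\<xi> \<in> D" using xi unfolding D_def by blast
  hence "D \<noteq> {}" by blast
  moreover have "D \<subseteq> Field L" unfolding D_def by blast
  ultimately obtain m where m: "m \<in> D" "\<forall>b\<in>D. (m,b) \<in> L" using WO_min[OF LW] by meson
  have mF: "m \<in> Field L" and mne: "f m \<noteq> g m" using m(1) unfolding D_def by auto
  have below: "\<forall>\<beta>. (\<beta>, m) \<in> L \<and> \<beta> \<noteq> m \<longrightarrow> f \<beta> = g \<beta>"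
  proof (intro allI impI)
    fix \<beta> assume b: "(\<beta>, m) \<in> L \<and> \<beta> \<noteq> m"
    show "f \<beta> = g \<beta>"
    proof (rule ccontr)
      assume fb: "f \<beta> \<noteq> g \<beta>"
      have "\<beta> \<in> Field L" using b by (auto intro: FieldI1)
      hence "\<beta> \<in> D" using fb unfolding D_def by blast
      hence "(m,\<beta>) \<in> L" using m(2) by blast
      hence "m = \<beta>" using WO_anti[OF LW] b by blast
      thus False using b by simp
    qed
  qed
  have below2: "\<forall>\<beta>. (\<beta>, m) \<in> L \<and> \<beta> \<noteq> m \<longrightarrow> g \<beta> = f \<beta>" using below by simp
  have "W_less k (f m) (g m) \<or> W_less k (g m) (f m)"
    using W_total[OF kW XD1[OF f mF] XD1[OF g mF] mne] .
  thus ?thesis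
  proof
    assume "W_less k (f m) (g m)"
    hence "lt f g" unfolding lex_less_def using mF below by blast
    thus ?thesis ..
  next
    assume "W_less k (g m) (f m)"
    hence "lt g f" unfolding lex_less_def using mF below2 by blast
    thus ?thesis ..
  qed
qed

lemma strict_lin: "strict_linear_on X lt"
  unfolding strict_linear_on_def
proof (intro conjI ballI impI)
  fix x y w assume "x \<in> X" "y \<in> X" "w \<in> X" "lt x y \<and> lt y w"
  thus "lt x w" using lt_trans by blast
next
  fix x y assume "x \<in> X" "y \<in> X"
  thus "x = y \<or> lt x y \<or> lt y x" using lt_total by blast
qed (rule lt_irrefl)

end


context LX begin

abbreviation "T \<equiv> order_topology_on X lt"

definition C :: "'i \<Rightarrow> ('i \<Rightarrow> 'a option) \<Rightarrow> ('i \<Rightarrow> 'a option) set" where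
  "C \<delta> p = {h \<in> X. \<forall>\<beta>. (\<beta>, \<delta>) \<in> L \<longrightarrow> h \<beta> = p \<beta>}"

lemma topspace_T: "topspace T = X"
  unfolding order_topology_on_def by auto

lemma C_sub: "C \<delta> p \<subseteq> X" unfolding C_def by auto
lemma C_self: "p \<in> X \<Longrightarrow> p \<in> C \<delta> p" unfolding C_def by auto
lemma C_same: "h \<in> C \<delta> p \<Longrightarrow> C \<delta> p = C \<delta> h" unfolding C_def by auto
lemma C_mono: "(\<delta>, \<epsilon>) \<in> L \<Longrightarrow> C \<epsilon> p \<subseteq> C \<delta> p"
  unfolding C_def using WO_trans[OF LW] by blast

lemma lt_agree:
  assumes "\<alpha> \<in> Field L" "W_less k (f \<alpha>) (g \<alpha>)" "\<forall>\<beta>. (\<beta>, \<alpha>) \<in> L \<and> \<beta> \<noteq> \<alpha> \<longrightarrow> f \<beta> = g \<beta>"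
    "\<forall>\<beta>. (\<beta>, \<alpha>) \<in> L \<longrightarrow> f' \<beta> = f \<beta> \<and> g' \<beta> = g \<beta>"
  shows "lt f' g'"
  unfolding lex_less_def
proof (intro bexI[of _ \<alpha>] conjI allI impI)
  show "W_less k (f' \<alpha>) (g' \<alpha>)" using assms WO_refl[OF LW] by metis
  fix \<beta> assume "(\<beta>, \<alpha>) \<in> L \<and> \<beta> \<noteq> \<alpha>" thus "f' \<beta> = g' \<beta>" using assms by metis
qed (use assms in auto)

lemma X_upd:
  assumes f: "f \<in> X" and w: "w \<in> Field L" and v: "v \<in> W_set k"
  shows "f(w := v) \<in> X"
proof -
  obtain \<gamma> where g: "\<gamma> \<in> Field L" "\<forall>\<alpha>\<in>Field L. (\<gamma>, \<alpha>) \<in> L \<longrightarrow> f \<alpha> = Some z" using XD3[OF f] by blast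
  obtain w2 where w2: "w2 \<in> Field L" "(\<gamma>,w2) \<in> L" "(w,w2) \<in> L" "w \<noteq> w2" using noMax2[OF g(1) w] by blast
  have "\<forall>\<alpha>\<in>Field L. (w2, \<alpha>) \<in> L \<longrightarrow> (f(w:=v)) \<alpha> = Some z"
  proof (intro ballI impI)
    fix \<alpha> assume a: "\<alpha> \<in> Field L" "(w2,\<alpha>) \<in> L"
    hence "\<alpha> \<noteq> w" using w2 WO_anti[OF LW] by metis
    moreover have "(\<gamma>, \<alpha>) \<in> L" using a w2 WO_trans[OF LW] by metis
    ultimately show "(f(w:=v)) \<alpha> = Some z" using g a by simp
  qed
  note Z = this
  show ?thesis unfolding Xspace_def
  proof (intro CollectI conjI ballI allI impI)
    fix \<alpha> assume "\<alpha> \<in> Field L" thus "(f(w:=v)) \<alpha> \<in> W_set k" using v XD1[OF f] by simp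
  next
    fix \<alpha> assume "\<alpha> \<notin> Field L" thus "(f(w:=v)) \<alpha> = None" using w XD2[OF f] by auto
  next
    show "\<exists>\<gamma>\<in>Field L. \<forall>\<alpha>\<in>Field L. (\<gamma>, \<alpha>) \<in> L \<longrightarrow> (f(w := v)) \<alpha> = Some z" using w2(1) Z by blast
  qed
qed

lemma open_cone:
  assumes "openin T U" "h \<in> U"
  shows "\<exists>\<delta>\<in>Field L. C \<delta> h \<subseteq> U"
proof -
  have "generate_topology_on (insert X ({{y\<in>X. lt y a} | a. a \<in> X} \<union> {{y\<in>X. lt a y} | a. a \<in> X})) U"
    using assms(1) unfolding order_topology_on_def openin_topology_generated_by_iff .
  thus ?thesis using assms(2)
  proof (induction arbitrary: h)
    case Empty thus ?case by simp
  next
    case (Int a b)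
    then obtain d1 d2 where d: "d1 \<in> Field L" "C d1 h \<subseteq> a" "d2 \<in> Field L" "C d2 h \<subseteq> b" by blast
    from WO_tot[OF LW d(1) d(3)] show ?case
    proof
      assume "(d1,d2) \<in> L" thus ?case using d C_mono[of d1 d2 h] by blast
    next
      assume "(d2,d1) \<in> L" thus ?case using d C_mono[of d2 d1 h] by blast
    qed
  next
    case (UN K) thus ?case by blast
  next
    case (Basis s)
    then consider "s = X" | a where "a \<in> X" "s = {y\<in>X. lt y a}" | a where "a \<in> X" "s = {y\<in>X. lt a y}"
      by blast
    thus ?case
    proof cases
      case 1 thus ?thesis using Lne C_sub by blast
    next
      case 2
      then obtain \<alpha> where a: "\<alpha> \<in> Field L" "W_less k (h \<alpha>) (a \<alpha>)" "\<forall>\<beta>. (\<beta>, \<alpha>) \<in> L \<and> \<beta> \<noteq> \<alpha> \<longrightarrow> h \<beta> = a \<beta>"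
        using Basis(2) unfolding lex_less_def by blast
      have "C \<alpha> h \<subseteq> s"
      proof
        fix y assume y: "y \<in> C \<alpha> h"
        have "lt y a" by (rule lt_agree[OF a]) (use y in \<open>auto simp: C_def\<close>)
        thus "y \<in> s" using y 2 C_sub by blast
      qed
      thus ?thesis using a(1) by blast
    next
      case 3
      then obtain \<alpha> where a: "\<alpha> \<in> Field L" "W_less k (a \<alpha>) (h \<alpha>)" "\<forall>\<beta>. (\<beta>, \<alpha>) \<in> L \<and> \<beta> \<noteq> \<alpha> \<longrightarrow> a \<beta> = h \<beta>"
        using Basis(2) unfolding lex_less_def by blast
      have "C \<alpha> h \<subseteq> s"
      proof
        fix y assume y: "y \<in> C \<alpha> h"
        have "lt a y" by (rule lt_agree[OF a]) (use y in \<open>auto simp: C_def\<close>)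
        thus "y \<in> s" using y 3 C_sub by blast
      qed
      thus ?thesis using a(1) by blast
    qed
  qed
qed

lemma open_ray1: "a \<in> X \<Longrightarrow> openin T {y\<in>X. lt y a}"
  unfolding order_topology_on_def by (rule topology_generated_by_Basis) blast
lemma open_ray2: "a \<in> X \<Longrightarrow> openin T {y\<in>X. lt a y}"
  unfolding order_topology_on_def by (rule topology_generated_by_Basis) blast

lemma nbhd_in_C:
  assumes h: "h \<in> X" and d: "\<delta> \<in> Field L"
  shows "\<exists>a b. a \<in> X \<and> b \<in> X \<and> lt a h \<and> lt h b \<and> {y\<in>X. lt a y} \<inter> {y\<in>X. lt y b} \<subseteq> C \<delta> h"
proof -
  obtain \<gamma> where g: "\<gamma> \<in> Field L" "\<forall>\<alpha>\<in>Field L. (\<gamma>, \<alpha>) \<in> L \<longrightarrow> h \<alpha> = Some z" using XD3[OF h] by blast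
  obtain w where w: "w \<in> Field L" "(\<gamma>,w) \<in> L" "(\<delta>,w) \<in> L" "\<delta> \<noteq> w" using noMax2[OF g(1) d] by blast
  have hw: "h w = Some z" using g w by blast
  obtain c where c: "c \<in> Field k" "W_less k (Some z) (Some c)" using one_ex by blast
  define a where "a = h(w := None)"
  define b where "b = h(w := Some c)"
  have aX: "a \<in> X" unfolding a_def by (rule X_upd[OF h w(1)]) (simp add: W_set_def)
  have bX: "b \<in> X" unfolding b_def by (rule X_upd[OF h w(1)]) (use c in \<open>simp add: W_set_def\<close>)
  have ah': "lt a h" unfolding lex_less_def a_def using w(1) hw by (intro bexI[of _ w]) auto
  have hb: "lt h b" unfolding lex_less_def b_def using w(1) hw c by (intro bexI[of _ w]) auto
  have "{y\<in>X. lt a y} \<inter> {y\<in>X. lt y b} \<subseteq> C \<delta> h"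
  proof
    fix y assume y: "y \<in> {y\<in>X. lt a y} \<inter> {y\<in>X. lt y b}"
    hence yX: "y \<in> X" and ay: "lt a y" and yb: "lt y b" by auto
    show "y \<in> C \<delta> h"
    proof (cases "y = h")
      case True thus ?thesis using C_self h by simp
    next
      case False
      from lt_total[OF yX h False] show ?thesis
      proof
        assume "lt y h"
        then obtain \<alpha> where al: "\<alpha> \<in> Field L" "W_less k (y \<alpha>) (h \<alpha>)" "\<forall>\<beta>. (\<beta>, \<alpha>) \<in> L \<and> \<beta> \<noteq> \<alpha> \<longrightarrow> y \<beta> = h \<beta>"
          unfolding lex_less_def by blast
        show ?thesis
        proof (cases "(\<alpha>,\<delta>) \<in> L")
          case True
          have aw: "(\<alpha>,w) \<in> L" "\<alpha> \<noteq> w" using True w WO_trans[OF LW] WO_anti[OF LW] by metis+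
          have "lt y a"
          proof (rule lt_agree[OF al], intro allI impI)
            fix \<beta> assume "(\<beta>,\<alpha>) \<in> L"
            hence "\<beta> \<noteq> w" using aw WO_anti[OF LW] by metis
            thus "y \<beta> = y \<beta> \<and> a \<beta> = h \<beta>" unfolding a_def by simp
          qed
          hence "lt a a" using lt_trans[OF aX yX aX ay] by blast
          thus ?thesis using lt_irrefl by blast
        next
          case False
          hence "(\<delta>,\<alpha>) \<in> L" "\<delta> \<noteq> \<alpha>" using WO_tot[OF LW d al(1)] WO_refl[OF LW d] by auto
          hence "\<forall>\<beta>. (\<beta>,\<delta>) \<in> L \<longrightarrow> y \<beta> = h \<beta>" using al(3) WO_trans[OF LW] WO_anti[OF LW] by metis
          thus ?thesis using yX unfolding C_def by blast
        qed
      next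
        assume "lt h y"
        then obtain \<alpha> where al: "\<alpha> \<in> Field L" "W_less k (h \<alpha>) (y \<alpha>)" "\<forall>\<beta>. (\<beta>, \<alpha>) \<in> L \<and> \<beta> \<noteq> \<alpha> \<longrightarrow> h \<beta> = y \<beta>"
          unfolding lex_less_def by blast
        show ?thesis
        proof (cases "(\<alpha>,\<delta>) \<in> L")
          case True
          have aw: "(\<alpha>,w) \<in> L" "\<alpha> \<noteq> w" using True w WO_trans[OF LW] WO_anti[OF LW] by metis+
          have "lt b y"
          proof (rule lt_agree[OF al], intro allI impI)
            fix \<beta> assume "(\<beta>,\<alpha>) \<in> L"
            hence "\<beta> \<noteq> w" using aw WO_anti[OF LW] by metis
            thus "b \<beta> = h \<beta> \<and> y \<beta> = y \<beta>" unfolding b_def by simp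
          qed
          hence "lt b b" using lt_trans[OF bX yX bX _ yb] by blast
          thus ?thesis using lt_irrefl by blast
        next
          case False
          hence "(\<delta>,\<alpha>) \<in> L" "\<delta> \<noteq> \<alpha>" using WO_tot[OF LW d al(1)] WO_refl[OF LW d] by auto
          hence "\<forall>\<beta>. (\<beta>,\<delta>) \<in> L \<longrightarrow> y \<beta> = h \<beta>" using al(3) WO_trans[OF LW] WO_anti[OF LW] by metis
          thus ?thesis using yX unfolding C_def by blast
        qed
      qed
    qed
  qed
  thus ?thesis using aX bX ah' hb by blast
qed

lemma C_open:
  assumes p: "p \<in> X" and d: "\<delta> \<in> Field L"
  shows "openin T (C \<delta> p)"
proof -
  have "\<forall>h\<in>C \<delta> p. \<exists>V. openin T V \<and> h \<in> V \<and> V \<subseteq> C \<delta> p"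
  proof
    fix h assume h: "h \<in> C \<delta> p"
    hence hX: "h \<in> X" using C_sub by blast
    obtain a b where ab: "a \<in> X" "b \<in> X" "lt a h" "lt h b" "{y\<in>X. lt a y} \<inter> {y\<in>X. lt y b} \<subseteq> C \<delta> h"
      using nbhd_in_C[OF hX d] by blast
    show "\<exists>V. openin T V \<and> h \<in> V \<and> V \<subseteq> C \<delta> p"
      using ab hX C_same[OF h] open_ray1[OF ab(2)] open_ray2[OF ab(1)]
      by (intro exI[of _ "{y\<in>X. lt a y} \<inter> {y\<in>X. lt y b}"]) auto
  qed
  thus ?thesis using openin_subopen by blast
qed

end


context LX begin

lemma limit:
  fixes f :: "nat \<Rightarrow> 'i \<Rightarrow> 'a option" and d :: "nat \<Rightarrow> 'i"
  assumes fX: "\<And>n. f n \<in> X" and dF: "\<And>n. d n \<in> Field L"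
    and nest: "\<And>n m. n \<le> m \<Longrightarrow> f m \<in> C (d n) (f n)"
  shows "\<exists>g. \<forall>n. g \<in> C (d n) (f n)"
proof -
  have rs: "range d \<subseteq> Field L" using dF by blast
  have rc: "countable (range d)" by simp
  obtain \<eta> where eta: "\<eta> \<in> Field L" "\<forall>t\<in>range d. (t,\<eta>) \<in> L \<and> t \<noteq> \<eta>"
    using Lbnd[OF rs rc] by blast
  define g where "g \<beta> = (if \<exists>n. (\<beta>, d n) \<in> L then f (SOME n. (\<beta>, d n) \<in> L) \<beta>
      else if \<beta> \<in> Field L then Some z else None)" for \<beta>
  have key: "g \<beta> = f n \<beta>" if bn: "(\<beta>, d n) \<in> L" for \<beta> n
  proof -
    define m where "m = (SOME n. (\<beta>, d n) \<in> L)"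
    have bm: "(\<beta>, d m) \<in> L" unfolding m_def using bn by (rule someI)
    have ex: "\<exists>n. (\<beta>, d n) \<in> L" using bn by blast
    have gm: "g \<beta> = f m \<beta>" unfolding g_def m_def using ex by (simp only: if_True)
    show ?thesis
    proof (cases "n \<le> m")
      case True
      hence "f m \<in> C (d n) (f n)" by (rule nest)
      hence "f m \<beta> = f n \<beta>" using bn unfolding C_def by blast
      thus ?thesis using gm by simp
    next
      case False
      hence "f n \<in> C (d m) (f m)" by (intro nest) simp
      hence "f n \<beta> = f m \<beta>" using bm unfolding C_def by blast
      thus ?thesis using gm by simp
    qed
  qed
  have gX: "g \<in> X" unfolding Xspace_def
  proof (intro CollectI conjI ballI allI impI)
    fix \<alpha> assume a: "\<alpha> \<in> Field L"
    show "g \<alpha> \<in> W_set k"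
    proof (cases "\<exists>n. (\<alpha>, d n) \<in> L")
      case True
      then obtain n where "(\<alpha>, d n) \<in> L" by blast
      hence "g \<alpha> = f n \<alpha>" by (rule key)
      thus ?thesis using XD1[OF fX a] by simp
    next
      case False thus ?thesis using a z_in unfolding g_def W_set_def by simp
    qed
  next
    fix \<alpha> assume a: "\<alpha> \<notin> Field L"
    hence "\<not> (\<exists>n. (\<alpha>, d n) \<in> L)" by (auto intro: FieldI1)
    thus "g \<alpha> = None" using a unfolding g_def by simp
  next
    show "\<exists>\<gamma>\<in>Field L. \<forall>\<alpha>\<in>Field L. (\<gamma>, \<alpha>) \<in> L \<longrightarrow> g \<alpha> = Some z"
    proof (intro bexI[of _ \<eta>] ballI impI)
      fix \<alpha> assume a: "\<alpha> \<in> Field L" "(\<eta>, \<alpha>) \<in> L"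
      have "\<not> (\<exists>n. (\<alpha>, d n) \<in> L)"
      proof
        assume "\<exists>n. (\<alpha>, d n) \<in> L"
        then obtain n where n: "(\<alpha>, d n) \<in> L" by blast
        have "(\<eta>, d n) \<in> L" using WO_trans[OF LW a(2) n] .
        moreover have "(d n, \<eta>) \<in> L" "d n \<noteq> \<eta>" using eta(2) by auto
        ultimately show False using WO_anti[OF LW] by blast
      qed
      thus "g \<alpha> = Some z" using a(1) unfolding g_def by simp
    qed (rule eta(1))
  qed
  have "\<forall>n. g \<in> C (d n) (f n)" unfolding C_def
  proof (intro allI CollectI conjI impI)
    fix n \<beta> assume "(\<beta>, d n) \<in> L" thus "g \<beta> = f n \<beta>" by (rule key)
  qed (rule gX)
  thus ?thesis by blast
qed

definition dsel :: "('i \<Rightarrow> 'a option) set \<Rightarrow> ('i \<Rightarrow> 'a option) \<Rightarrow> 'i" where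
  "dsel B x = (SOME \<delta>. \<delta> \<in> Field L \<and> C \<delta> x \<subseteq> B)"

definition strat :: "(('i \<Rightarrow> 'a option) set \<times> ('i \<Rightarrow> 'a option)) list \<Rightarrow> ('i \<Rightarrow> 'a option) set" where
  "strat hist = (case last hist of (B, x) \<Rightarrow> C (dsel B x) x)"

lemma dsel: assumes "openin T B" "x \<in> B" shows "dsel B x \<in> Field L \<and> C (dsel B x) x \<subseteq> B"
proof -
  have "\<exists>\<delta>. \<delta> \<in> Field L \<and> C \<delta> x \<subseteq> B" using open_cone[OF assms] by blast
  thus ?thesis unfolding dsel_def by (rule someI_ex)
qed

lemma ans: "choquet_answer strat B f n = C (dsel (B n) (f n)) (f n)"
  unfolding choquet_answer_def strat_def by simp

lemma step_ok:
  assumes "openin T B" "f \<in> B"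
  shows "openin T (C (dsel B f) f) \<and> f \<in> C (dsel B f) f \<and> C (dsel B f) f \<subseteq> B"
proof -
  have fX: "f \<in> X" using openin_subset[OF assms(1)] assms(2) topspace_T by blast
  show ?thesis using dsel[OF assms] C_open[OF fX] C_self[OF fX] by blast
qed

lemma choquet: "strong_choquet T"
  unfolding strong_choquet_def
proof (intro exI[of _ strat] conjI allI impI)
  fix B f n assume "choquet_I_legal_upto T strat B f n"
  hence "openin T (B n)" "f n \<in> B n" unfolding choquet_I_legal_upto_def by auto
  thus "openin T (choquet_answer strat B f n)" "f n \<in> choquet_answer strat B f n"
    "choquet_answer strat B f n \<subseteq> B n" using step_ok ans by auto
next
  fix B f assume leg: "\<forall>n. choquet_I_legal_upto T strat B f n"
  define A where "A n = choquet_answer strat B f n" for n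
  have o: "openin T (B n)" "f n \<in> B n" for n using leg unfolding choquet_I_legal_upto_def by auto
  have AB: "f n \<in> A n" "A n \<subseteq> B n" for n using step_ok[OF o] ans unfolding A_def by auto
  have BA: "B (Suc n) \<subseteq> A n" for n using leg[rule_format, of "Suc n"]
    unfolding choquet_I_legal_upto_def A_def by fastforce
  have dec: "n \<le> m \<Longrightarrow> A m \<subseteq> A n" for n m
  proof (induction rule: dec_induct)
    case base thus ?case by simp
  next
    case (step q) thus ?case using AB(2)[of "Suc q"] BA[of q] by blast
  qed
  have fX: "f n \<in> X" for n using AB(1) AB(2) o(1) openin_subset topspace_T by blast
  have dF: "dsel (B n) (f n) \<in> Field L" for n using dsel[OF o] by blast
  have "\<exists>g. \<forall>n. g \<in> C (dsel (B n) (f n)) (f n)"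
  proof (rule limit[OF fX dF])
    fix n m :: nat assume "n \<le> m"
    thus "f m \<in> C (dsel (B n) (f n)) (f n)" using dec AB(1)[of m] ans unfolding A_def by blast
  qed
  thus "(\<Inter>n. choquet_answer strat B f n) \<noteq> {}" using ans by blast
qed

lemma dense_meets:
  assumes "dense_in T D" "openin T V" "V \<noteq> {}"
  shows "\<exists>y. y \<in> D \<and> y \<in> V"
proof -
  obtain x where x: "x \<in> V" using assms(3) by blast
  hence "x \<in> topspace T" using openin_subset[OF assms(2)] by blast
  hence "x \<in> T closure_of D" using assms(1) unfolding dense_in_def by simp
  thus ?thesis using x assms(2) unfolding in_closure_of by blast
qed

lemma baire: "baire_space T"
  unfolding baire_space_def
proof (intro allI impI disjI1)
  fix U :: "nat \<Rightarrow> ('i \<Rightarrow> 'a option) set"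
  assume H: "\<forall>n. openin T (U n) \<and> dense_in T (U n)"
  have main: "\<exists>y. y \<in> V \<and> (\<forall>n. y \<in> U n)" if V: "openin T V" "V \<noteq> {}" for V
  proof -
    have H0: "openin T (U 0)" "dense_in T (U 0)" using H by auto
    have "\<exists>y. y \<in> U 0 \<and> y \<in> V" by (rule dense_meets[OF H0(2) V])
    then obtain q0 where q0: "q0 \<in> U 0" "q0 \<in> V" by blast
    have oVU: "openin T (V \<inter> U 0)" using V(1) H0(1) by (rule openin_Int)
    have "q0 \<in> V \<inter> U 0" using q0 by blast
    then obtain d0 where d0: "d0 \<in> Field L" "C d0 q0 \<subseteq> V \<inter> U 0" using open_cone[OF oVU] by blast
    have "V \<subseteq> X" using openin_subset[OF V(1)] topspace_T by simp
    hence q0X: "q0 \<in> X" using q0 by blast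
    define P where "P n r \<longleftrightarrow> (fst r \<in> X \<and> snd r \<in> Field L \<and> C (snd r) (fst r) \<subseteq> U n)" for n r
    define step where "step n pd = (SOME r. fst r \<in> X \<and> snd r \<in> Field L \<and>
        C (snd r) (fst r) \<subseteq> C (snd pd) (fst pd) \<inter> U (Suc n))" for n and pd :: "('i \<Rightarrow> 'a option) \<times> 'i"
    have step_ex: "\<exists>r. fst r \<in> X \<and> snd r \<in> Field L \<and> C (snd r) (fst r) \<subseteq> C \<delta> p \<inter> U (Suc n)"
      if pd: "p \<in> X" "\<delta> \<in> Field L" for p \<delta> n
    proof -
      have oc: "openin T (C \<delta> p)" using C_open pd by blast
      have "C \<delta> p \<noteq> {}" using C_self[OF pd(1)] by blast
      then obtain y where y: "y \<in> U (Suc n)" "y \<in> C \<delta> p" using dense_meets[OF _ oc] H by blast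
      have "openin T (C \<delta> p \<inter> U (Suc n))" using oc H by blast
      then obtain \<delta>' where "\<delta>' \<in> Field L" "C \<delta>' y \<subseteq> C \<delta> p \<inter> U (Suc n)" using open_cone y by blast
      moreover have "y \<in> X" using y C_sub by blast
      ultimately show ?thesis by (intro exI[of _ "(y, \<delta>')"]) auto
    qed
    define seq where "seq = rec_nat (q0, d0) step"
    have seq_Suc: "seq (Suc n) = step n (seq n)" for n unfolding seq_def by simp
    have inv: "fst (seq n) \<in> X \<and> snd (seq n) \<in> Field L" for n
    proof (induction n)
      case 0 thus ?case using q0X d0 unfolding seq_def by simp
    next
      case (Suc n)
      have "fst (step n (seq n)) \<in> X \<and> snd (step n (seq n)) \<in> Field L \<and>
          C (snd (step n (seq n))) (fst (step n (seq n))) \<subseteq> C (snd (seq n)) (fst (seq n)) \<inter> U (Suc n)"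
        unfolding step_def by (rule someI_ex) (use step_ex Suc in blast)
      thus ?case using seq_Suc by simp
    qed
    define f where "f n = fst (seq n)" for n
    define d where "d n = snd (seq n)" for n
    have sub: "C (d (Suc n)) (f (Suc n)) \<subseteq> C (d n) (f n) \<inter> U (Suc n)" for n
    proof -
      have "fst (step n (seq n)) \<in> X \<and> snd (step n (seq n)) \<in> Field L \<and>
          C (snd (step n (seq n))) (fst (step n (seq n))) \<subseteq> C (snd (seq n)) (fst (seq n)) \<inter> U (Suc n)"
        unfolding step_def by (rule someI_ex) (use step_ex inv in blast)
      thus ?thesis using seq_Suc unfolding f_def d_def by simp
    qed
    have dec: "n \<le> m \<Longrightarrow> C (d m) (f m) \<subseteq> C (d n) (f n)" for n m
    proof (induction rule: dec_induct)
      case base thus ?case by simp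
    next
      case (step q) thus ?case using sub[of q] by blast
    qed
    have fX: "f n \<in> X" for n using inv unfolding f_def by blast
    have dF: "d n \<in> Field L" for n using inv unfolding d_def by blast
    have "\<exists>g. \<forall>n. g \<in> C (d n) (f n)"
    proof (rule limit[OF fX dF])
      fix n m :: nat assume "n \<le> m"
      hence "C (d m) (f m) \<subseteq> C (d n) (f n)" by (rule dec)
      thus "f m \<in> C (d n) (f n)" using C_self[OF fX] by blast
    qed
    then obtain g where g: "\<forall>n. g \<in> C (d n) (f n)" by blast
    have "C (d 0) (f 0) \<subseteq> V \<inter> U 0" using d0 unfolding d_def f_def seq_def by simp
    hence g0: "g \<in> V" "g \<in> U 0" using g by blast+
    have "g \<in> U n" for n
    proof (cases n)
      case 0 thus ?thesis using g0 by simp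
    next
      case (Suc q) thus ?thesis using g sub[of q] by blast
    qed
    thus ?thesis using g0 by blast
  qed
  show "dense_in T (\<Inter>n. U n)" unfolding dense_in_def
  proof
    have "U 0 \<subseteq> topspace T" using H openin_subset by blast
    thus "(\<Inter>n. U n) \<subseteq> topspace T" by blast
    show "T closure_of (\<Inter>n. U n) = topspace T"
    proof
      show "T closure_of (\<Inter>n. U n) \<subseteq> topspace T" by (rule closure_of_subset_topspace)
      show "topspace T \<subseteq> T closure_of (\<Inter>n. U n)"
      proof
        fix x assume x: "x \<in> topspace T"
        show "x \<in> T closure_of (\<Inter>n. U n)" unfolding in_closure_of
        proof (intro conjI allI impI)
          fix W assume W: "x \<in> W \<and> openin T W"
          hence "W \<noteq> {}" by blast
          then obtain y where "y \<in> W" "\<forall>n. y \<in> U n" using main W by blast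
          thus "\<exists>y. y \<in> (\<Inter>n. U n) \<and> y \<in> W" by blast
        qed (rule x)
      qed
    qed
  qed
qed

end



context LX begin

lemma open_sub_X: "openin T U \<Longrightarrow> U \<subseteq> X"
  using openin_subset[of T U] unfolding topspace_T .

definition Bs where "Bs = {U. \<exists>\<delta> p. U = C \<delta> p \<and> \<delta> \<in> Field L \<and> p \<in> X}"

lemma nonarch: "non_archimedean T"
  unfolding non_archimedean_def
proof (intro exI[of _ Bs] conjI ballI)
  show "is_base_of T Bs"
    unfolding is_base_of_def
  proof (intro conjI ballI allI impI)
    fix U assume "U \<in> Bs"
    then obtain \<delta> p where "U = C \<delta> p" "\<delta> \<in> Field L" "p \<in> X" unfolding Bs_def by blast
    thus "openin T U" using C_open by simp
  next
    fix U assume U: "openin T U"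
    define UU where "UU = {B \<in> Bs. B \<subseteq> U}"
    have "U \<subseteq> \<Union>UU"
    proof
      fix h assume h: "h \<in> U"
      then obtain \<delta> where d: "\<delta> \<in> Field L" "C \<delta> h \<subseteq> U" using open_cone[OF U] by blast
      have hX: "h \<in> X" using h open_sub_X[OF U] by blast
      have "C \<delta> h \<in> Bs" unfolding Bs_def using d(1) hX by blast
      hence "C \<delta> h \<in> UU" unfolding UU_def using d(2) by blast
      moreover have "h \<in> C \<delta> h" using C_self[OF hX] .
      ultimately show "h \<in> \<Union>UU" by blast
    qed
    moreover have "\<Union>UU \<subseteq> U" unfolding UU_def by blast
    ultimately have "U = \<Union>UU" by (rule subset_antisym)
    moreover have "UU \<subseteq> Bs" unfolding UU_def by blast
    ultimately show "\<exists>\<U>\<subseteq>Bs. U = \<Union>\<U>" by blast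
  qed
next
  fix U V assume U: "U \<in> Bs" and V: "V \<in> Bs"
  obtain \<delta> p where u: "U = C \<delta> p" "\<delta> \<in> Field L" using U unfolding Bs_def by blast
  obtain \<epsilon> q where v: "V = C \<epsilon> q" "\<epsilon> \<in> Field L" using V unfolding Bs_def by blast
  show "U \<inter> V = {} \<or> U \<subseteq> V \<or> V \<subseteq> U"
  proof (cases "U \<inter> V = {}")
    case False
    then obtain h where h: "h \<in> C \<delta> p" "h \<in> C \<epsilon> q" using u v by blast
    have e1: "C \<delta> p = C \<delta> h" using C_same[OF h(1)] .
    have e2: "C \<epsilon> q = C \<epsilon> h" using C_same[OF h(2)] .
    from WO_tot[OF LW u(2) v(2)] show ?thesis
    proof
      assume "(\<delta>,\<epsilon>) \<in> L"
      hence "C \<epsilon> h \<subseteq> C \<delta> h" by (rule C_mono)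
      thus ?thesis using u v e1 e2 by simp
    next
      assume "(\<epsilon>,\<delta>) \<in> L"
      hence "C \<delta> h \<subseteq> C \<epsilon> h" by (rule C_mono)
      thus ?thesis using u v e1 e2 by simp
    qed
  qed simp
qed

lemma hpara: "hereditarily_paracompact T"
  unfolding hereditarily_paracompact_def paracompact_space_def
proof (intro allI impI)
  fix S :: "('i \<Rightarrow> 'a option) set" and \<C>
  assume S: "S \<subseteq> topspace T"
    and cov: "(\<forall>c\<in>\<C>. openin (subtopology T S) c) \<and> \<Union>\<C> = topspace (subtopology T S)"
  have SX: "S \<subseteq> X" using S topspace_T by simp
  have tS: "topspace (subtopology T S) = S" using S by (simp add: topspace_subtopology Int_absorb1)
  define Good where "Good x \<delta> \<longleftrightarrow> \<delta> \<in> Field L \<and> (\<exists>c\<in>\<C>. C \<delta> x \<inter> S \<subseteq> c)" for x \<delta>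
  have ex_good: "\<exists>\<delta>. Good x \<delta>" if x: "x \<in> S" for x
  proof -
    obtain c where c: "c \<in> \<C>" "x \<in> c" using cov x tS by blast
    have "openin (subtopology T S) c" using cov c(1) by blast
    then obtain Op where Op: "openin T Op" "c = Op \<inter> S" unfolding openin_subtopology by blast
    obtain \<delta> where d: "\<delta> \<in> Field L" "C \<delta> x \<subseteq> Op" using open_cone[OF Op(1)] c(2) Op(2) by blast
    have "C \<delta> x \<inter> S \<subseteq> c" using d Op by blast
    thus ?thesis unfolding Good_def using d c by blast
  qed
  have ex_min: "\<exists>\<delta>. Good x \<delta> \<and> (\<forall>\<delta>'. Good x \<delta>' \<longrightarrow> (\<delta>,\<delta>') \<in> L)" if x: "x \<in> S" for x
  proof -
    have "{\<delta>. Good x \<delta>} \<subseteq> Field L" unfolding Good_def by blast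
    moreover have "{\<delta>. Good x \<delta>} \<noteq> {}" using ex_good[OF x] by blast
    ultimately obtain m where "m \<in> {\<delta>. Good x \<delta>}" "\<forall>b\<in>{\<delta>. Good x \<delta>}. (m,b) \<in> L"
      using WO_min[OF LW] by meson
    thus ?thesis by blast
  qed
  define m where "m x = (SOME \<delta>. Good x \<delta> \<and> (\<forall>\<delta>'. Good x \<delta>' \<longrightarrow> (\<delta>,\<delta>') \<in> L))" for x
  have m: "Good x (m x)" "\<And>\<delta>'. Good x \<delta>' \<Longrightarrow> (m x,\<delta>') \<in> L" if "x \<in> S" for x
    using someI_ex[OF ex_min[OF that]] unfolding m_def by blast+
  define D where "D x = C (m x) x \<inter> S" for x
  have xD: "x \<in> D x" if "x \<in> S" for x using that SX C_self unfolding D_def by blast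
  have aux: "C (m x) x = C (m y) y" if xy: "x \<in> S" "y \<in> S" "(m x, m y) \<in> L"
    and h: "h \<in> C (m x) x" "h \<in> C (m y) y" for x y h
  proof -
    have e1: "C (m x) x = C (m x) h" using C_same[OF h(1)] .
    have e2: "C (m y) y = C (m y) h" using C_same[OF h(2)] .
    have "C (m y) h \<subseteq> C (m x) h" using xy(3) by (rule C_mono)
    moreover have "y \<in> C (m y) y" using C_self xy(2) SX by blast
    ultimately have "y \<in> C (m x) x" using e1 e2 by blast
    hence e3: "C (m x) x = C (m x) y" by (rule C_same)
    have "Good y (m x)" using m(1)[OF xy(1)] e3 unfolding Good_def by simp
    hence "(m y, m x) \<in> L" using m(2)[OF xy(2)] by blast
    hence "m x = m y" using WO_anti[OF LW xy(3)] by blast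
    thus ?thesis using e3 by simp
  qed
  have same: "D x = D y" if xy: "x \<in> S" "y \<in> S" and ne: "D x \<inter> D y \<noteq> {}" for x y
  proof -
    obtain h where h: "h \<in> C (m x) x" "h \<in> C (m y) y" using ne unfolding D_def by blast
    have F: "m x \<in> Field L" "m y \<in> Field L" using m(1) xy unfolding Good_def by blast+
    from WO_tot[OF LW F] show ?thesis
    proof
      assume "(m x, m y) \<in> L" thus ?thesis using aux xy h unfolding D_def by metis
    next
      assume "(m y, m x) \<in> L" thus ?thesis using aux[of y x h] xy h unfolding D_def by metis
    qed
  qed
  show "\<exists>\<D>. (\<forall>Da\<in>\<D>. openin (subtopology T S) Da \<and> (\<exists>c\<in>\<C>. Da \<subseteq> c)) \<and>
            \<Union>\<D> = topspace (subtopology T S) \<and> locally_finite_in (subtopology T S) \<D>"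
  proof (intro exI[of _ "D ` S"] conjI ballI)
    fix Da assume "Da \<in> D ` S"
    then obtain x where x: "x \<in> S" "Da = D x" by blast
    have F: "m x \<in> Field L" using m(1)[OF x(1)] unfolding Good_def by blast
    have "openin T (C (m x) x)" using C_open F SX x(1) by blast
    thus "openin (subtopology T S) Da" unfolding openin_subtopology D_def x(2) by blast
    show "\<exists>c\<in>\<C>. Da \<subseteq> c" using m(1)[OF x(1)] unfolding Good_def D_def x(2) by blast
  next
    show U: "\<Union>(D ` S) = topspace (subtopology T S)"
      using xD tS unfolding D_def by blast
    show "locally_finite_in (subtopology T S) (D ` S)"
      unfolding locally_finite_in_def
    proof (intro conjI ballI)
      show "\<Union>(D ` S) \<subseteq> topspace (subtopology T S)" using U by simp
      fix x assume "x \<in> topspace (subtopology T S)"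
      hence x: "x \<in> S" using tS by simp
      have F: "m x \<in> Field L" using m(1)[OF x] unfolding Good_def by blast
      have "openin T (C (m x) x)" using C_open F SX x by blast
      hence o: "openin (subtopology T S) (D x)" unfolding openin_subtopology D_def by blast
      have "{U \<in> D ` S. U \<inter> D x \<noteq> {}} \<subseteq> {D x}" using same x by blast
      hence "finite {U \<in> D ` S. U \<inter> D x \<noteq> {}}" by (rule finite_subset) simp
      thus "\<exists>V. openin (subtopology T S) V \<and> x \<in> V \<and> finite {U \<in> D ` S. U \<inter> V \<noteq> {}}"
        using o xD[OF x] by blast
    qed
  qed
qed

lemma dis: "dis_le T (Field L)"
  unfolding dis_le_def
proof -
  define E where "E \<delta> = {f \<in> X. \<forall>\<beta>\<in>Field L. (\<delta>,\<beta>) \<in> L \<longrightarrow> f \<beta> = Some z}" for \<delta>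
  have un: "\<Union>(E ` Field L) = topspace T"
  proof
    show "\<Union>(E ` Field L) \<subseteq> topspace T" unfolding E_def topspace_T by auto
    show "topspace T \<subseteq> \<Union>(E ` Field L)"
    proof
      fix f assume "f \<in> topspace T"
      hence f: "f \<in> X" using topspace_T by simp
      then obtain \<gamma> where "\<gamma> \<in> Field L" "\<forall>\<alpha>\<in>Field L. (\<gamma>, \<alpha>) \<in> L \<longrightarrow> f \<alpha> = Some z" using XD3 by blast
      thus "f \<in> \<Union>(E ` Field L)" using f unfolding E_def by blast
    qed
  qed
  have disc: "subtopology T (E \<delta>) = discrete_topology (E \<delta>)" if d: "\<delta> \<in> Field L" for \<delta>
  proof -
    have EX: "E \<delta> \<subseteq> X" unfolding E_def by blast
    have "discrete_topology (E \<delta>) = subtopology T (E \<delta>)"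
      unfolding discrete_topology_unique
    proof (intro conjI ballI)
      show "topspace (subtopology T (E \<delta>)) = E \<delta>" using EX by (simp add: topspace_subtopology topspace_T Int_absorb1)
      fix x assume x: "x \<in> E \<delta>"
      hence xX: "x \<in> X" using EX by blast
      have "C \<delta> x \<inter> E \<delta> = {x}"
      proof
        show "{x} \<subseteq> C \<delta> x \<inter> E \<delta>" using x C_self[OF xX] by blast
        show "C \<delta> x \<inter> E \<delta> \<subseteq> {x}"
        proof
          fix y assume y: "y \<in> C \<delta> x \<inter> E \<delta>"
          have "y \<beta> = x \<beta>" for \<beta>
          proof (cases "\<beta> \<in> Field L")
            case False
            have "y \<in> X" using y EX by blast
            thus ?thesis using XD2[OF _ False] xX by metis
          next
            case True
            from WO_tot[OF LW True d] show ?thesis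
            proof
              assume "(\<beta>,\<delta>) \<in> L" thus ?thesis using y unfolding C_def by blast
            next
              assume "(\<delta>,\<beta>) \<in> L" thus ?thesis using y x True unfolding E_def by simp
            qed
          qed
          thus "y \<in> {x}" by auto
        qed
      qed
      moreover have "openin T (C \<delta> x)" using C_open xX d by blast
      ultimately show "openin (subtopology T (E \<delta>)) {x}" unfolding openin_subtopology by blast
    qed
    thus ?thesis by simp
  qed
  show "\<exists>\<D>. \<Union>\<D> = topspace T \<and>
       (\<forall>D\<in>\<D>. D \<subseteq> topspace T \<and> subtopology T D = discrete_topology D) \<and> |\<D>| \<le>o |Field L|"
  proof (intro exI[of _ "E ` Field L"] conjI ballI)
    show "\<Union>(E ` Field L) = topspace T" by (rule un)
    fix D assume "D \<in> E ` Field L"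
    then obtain \<delta> where dd: "\<delta> \<in> Field L" "D = E \<delta>" by blast
    show "D \<subseteq> topspace T" unfolding dd(2) E_def topspace_T by blast
    show "subtopology T D = discrete_topology D" unfolding dd(2) by (rule disc[OF dd(1)])
  next
    show "|E ` Field L| \<le>o |Field L|" by (rule card_of_image)
  qed
qed

end



lemma fin_less_inf: "finite A \<Longrightarrow> infinite B \<Longrightarrow> |A| <o |B|"
  using card_of_ordLeq_finite not_ordLeq_iff_ordLess[OF card_of_Well_order card_of_Well_order] by blast

lemma under_less:
  assumes k: "Card_order k" "infinite (Field k)" and s: "s \<in> Field k"
  shows "|under k s| <o |Field k|"
proof -
  have W: "Well_order k" using k(1) unfolding card_order_on_def by blast
  have R: "Refl k" using W by (simp add: order_on_defs)
  have 1: "|underS k s| <o k" using card_of_underS[OF k(1) s] .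
  have 2: "|{s}| <o k"
    using fin_less_inf[of "{s}" "Field k"] k card_of_Field_ordIso[OF k(1)] ordLess_ordIso_trans by blast
  have "|{s} \<union> underS k s| <o k" using card_of_Un_ordLess_infinite_Field[OF k(2) k(1) 2 1] .
  hence "|under k s| <o k" using under_insert[OF R s] by simp
  thus ?thesis using card_of_Field_ordIso[OF k(1)] ordLess_ordIso_trans ordIso_symmetric by blast
qed

context LX begin

lemma konig:
  assumes S: "cofinal_in k S" and e: "inj_on e S" "e ` S \<subseteq> Field L"
    and above: "\<forall>s\<in>S. (\<delta>, e s) \<in> L \<and> \<delta> \<noteq> e s"
    and eta: "\<eta> \<in> Field L" "\<forall>s\<in>S. (e s, \<eta>) \<in> L \<and> e s \<noteq> \<eta>"
    and p: "p \<in> X" and d: "\<delta> \<in> Field L"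
  shows "|Field k| <o |C \<delta> p|"
proof (rule ccontr)
  assume "\<not> ?thesis"
  hence le: "|C \<delta> p| \<le>o |Field k|"
    using not_ordLess_iff_ordLeq[OF card_of_Well_order[of "C \<delta> p"] card_of_Well_order[of "Field k"]] by simp
  have ne: "C \<delta> p \<noteq> {}" using C_self[OF p] by blast
  have "\<exists>H. H ` Field k = C \<delta> p" using card_of_ordLeq2[OF ne, of "Field k"] le by simp
  then obtain H where H: "H ` Field k = C \<delta> p" by blast
  define V where "V s = (\<lambda>\<xi>. H \<xi> (e s)) ` under k s" for s
  have cex: "\<exists>c\<in>Field k. Some c \<notin> V s" if s: "s \<in> S" for s
  proof (rule ccontr)
    assume "\<not> ?thesis"
    hence sub: "Some ` Field k \<subseteq> V s" by blast
    have sF: "s \<in> Field k" using S s unfolding cofinal_in_def by blast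
    have "|Field k| \<le>o |Some ` Field k|" using card_of_image[of "the" "Some ` Field k"]
      by (simp add: image_image)
    also have "|Some ` Field k| \<le>o |V s|" using card_of_mono1[OF sub] .
    also have "|V s| \<le>o |under k s|" unfolding V_def by (rule card_of_image)
    finally have "|Field k| \<le>o |under k s|" .
    moreover have "|under k s| <o |Field k|" using under_less[OF kC kinf sF] .
    ultimately show False using not_ordLess_ordLeq by blast
  qed
  define c where "c s = (SOME c. c \<in> Field k \<and> Some c \<notin> V s)" for s
  have c: "c s \<in> Field k" "Some (c s) \<notin> V s" if "s \<in> S" for s
    using someI_ex[OF cex[OF that, unfolded Bex_def]] unfolding c_def by blast+
  have Sne: "S \<noteq> {}"
  proof
    assume "S = {}"
    moreover have "Field k \<noteq> {}" using kinf by auto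
    ultimately show False using S unfolding cofinal_in_def by blast
  qed
  then obtain s0 where s0: "s0 \<in> S" by blast
  have a0: "(\<delta>, e s0) \<in> L" "\<delta> \<noteq> e s0" using above s0 by auto
  have b0: "(e s0, \<eta>) \<in> L" using eta(2) s0 by auto
  have dEta: "(\<delta>, \<eta>) \<in> L \<and> \<delta> \<noteq> \<eta>" using L_lt_le[OF a0 b0] .
  define g where "g \<beta> = (if \<beta> \<notin> Field L then None else if (\<beta>,\<delta>) \<in> L then p \<beta>
     else if \<beta> \<in> e ` S then Some (c (inv_into S e \<beta>)) else Some z)" for \<beta>
  have gX: "g \<in> X" unfolding Xspace_def
  proof (intro CollectI conjI ballI allI impI)
    fix \<alpha> assume a: "\<alpha> \<in> Field L"
    show "g \<alpha> \<in> W_set k"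
    proof (cases "(\<alpha>,\<delta>) \<in> L")
      case True thus ?thesis using a XD1[OF p a] unfolding g_def by simp
    next
      case False
      show ?thesis
      proof (cases "\<alpha> \<in> e ` S")
        case True
        hence "inv_into S e \<alpha> \<in> S" by (rule inv_into_into)
        thus ?thesis using a False True c(1) unfolding g_def W_set_def by simp
      next
        case F2: False thus ?thesis using a False z_in unfolding g_def W_set_def by simp
      qed
    qed
  next
    fix \<alpha> assume "\<alpha> \<notin> Field L" thus "g \<alpha> = None" unfolding g_def by simp
  next
    show "\<exists>\<gamma>\<in>Field L. \<forall>\<alpha>\<in>Field L. (\<gamma>, \<alpha>) \<in> L \<longrightarrow> g \<alpha> = Some z"
    proof (intro bexI[of _ \<eta>] ballI impI)
      fix \<alpha> assume a: "\<alpha> \<in> Field L" "(\<eta>, \<alpha>) \<in> L"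
      have n1: "(\<alpha>,\<delta>) \<notin> L"
      proof
        assume "(\<alpha>,\<delta>) \<in> L"
        hence "(\<eta>,\<delta>) \<in> L" using WO_trans[OF LW a(2)] by blast
        hence "\<eta> = \<delta>" using WO_anti[OF LW] dEta by blast
        thus False using dEta by simp
      qed
      have n2: "\<alpha> \<notin> e ` S"
      proof
        assume "\<alpha> \<in> e ` S"
        then obtain s where s: "s \<in> S" "\<alpha> = e s" by blast
        hence es: "(e s, \<eta>) \<in> L" "e s \<noteq> \<eta>" using eta(2) by blast+
        have "(\<eta>, e s) \<in> L" using a(2) s(2) by simp
        hence "e s = \<eta>" using WO_anti[OF LW es(1)] by blast
        thus False using es(2) by simp
      qed
      show "g \<alpha> = Some z" using a(1) n1 n2 unfolding g_def by simp
    qed (rule eta(1))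
  qed
  have gC: "g \<in> C \<delta> p" unfolding C_def
  proof (intro CollectI conjI allI impI)
    fix \<beta> assume b: "(\<beta>, \<delta>) \<in> L"
    hence "\<beta> \<in> Field L" by (rule FieldI1)
    thus "g \<beta> = p \<beta>" using b unfolding g_def by simp
  qed (rule gX)
  hence "g \<in> H ` Field k" using H by simp
  then obtain \<xi> where xi: "\<xi> \<in> Field k" "H \<xi> = g" by (rule imageE) simp
  obtain s where s: "s \<in> S" "(\<xi>, s) \<in> k" using S xi(1) unfolding cofinal_in_def by blast
  have "H \<xi> (e s) \<in> V s" unfolding V_def under_def using s(2) by blast
  moreover have "g (e s) = Some (c s)"
  proof -
    have es: "e s \<in> Field L" using e(2) s(1) by blast
    have ab: "(\<delta>, e s) \<in> L" "\<delta> \<noteq> e s" using above s(1) by auto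
    have "(e s, \<delta>) \<notin> L"
    proof
      assume "(e s, \<delta>) \<in> L"
      hence "\<delta> = e s" using WO_anti[OF LW ab(1)] by blast
      thus False using ab(2) by simp
    qed
    moreover have "e s \<in> e ` S" using s(1) by blast
    moreover have "inv_into S e (e s) = s" using inv_into_f_f[OF e(1) s(1)] .
    ultimately show ?thesis using es unfolding g_def by simp
  qed
  ultimately show False using c(2)[OF s(1)] xi(2) by simp
qed

lemma Delta:
  assumes ex: "\<forall>\<delta>\<in>Field L. \<exists>S e \<eta>. cofinal_in k S \<and> inj_on e S \<and> e ` S \<subseteq> Field L \<and>
      (\<forall>s\<in>S. (\<delta>, e s) \<in> L \<and> \<delta> \<noteq> e s) \<and> \<eta> \<in> Field L \<and> (\<forall>s\<in>S. (e s, \<eta>) \<in> L \<and> e s \<noteq> \<eta>)"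
  shows "Delta_gt T (Field k)"
  unfolding Delta_gt_def
proof (intro allI impI)
  fix U assume U: "openin T U \<and> U \<noteq> {}"
  then obtain p where p: "p \<in> U" by blast
  then obtain \<delta> where d: "\<delta> \<in> Field L" "C \<delta> p \<subseteq> U" using open_cone U by blast
  have pX: "p \<in> X" using p open_sub_X U by blast
  obtain S e \<eta> where E: "cofinal_in k S" "inj_on e S" "e ` S \<subseteq> Field L"
      "\<forall>s\<in>S. (\<delta>, e s) \<in> L \<and> \<delta> \<noteq> e s" "\<eta> \<in> Field L" "\<forall>s\<in>S. (e s, \<eta>) \<in> L \<and> e s \<noteq> \<eta>"
    using ex d(1) by blast
  have "|Field k| <o |C \<delta> p|" by (rule konig[OF E pX d(1)])
  thus "|Field k| <o |U|" using card_of_mono1[OF d(2)] ordLess_ordLeq_trans by blast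
qed

end



lemma countable_small:
  assumes "countable T" "infinite (Field l)"
  shows "|T| \<le>o |Field l|"
proof -
  obtain f :: "_ \<Rightarrow> nat" where "inj_on f T" using assms(1) unfolding countable_def by blast
  hence "|T| \<le>o |UNIV :: nat set|" using card_of_ordLeq[of T "UNIV :: nat set"] by blast
  moreover have "|UNIV :: nat set| \<le>o |Field l|" using infinite_iff_card_of_nat assms(2) by blast
  ultimately show ?thesis using ordLeq_transitive by blast
qed

theorem mainTheorem14:
  fixes k :: "'a rel" and l :: "'b rel"
  assumes "Card_order k" and "infinite (Field k)"
    and "Card_order l" and "infinite (Field l)"
    and "cf_le k (Field l)"
    and "(l, k) \<in> ordLess"
  shows "strict_linear_on (Xspace k (cardSuc l)) (lex_less k (cardSuc l))
    \<and> strong_choquet (order_topology_on (Xspace k (cardSuc l)) (lex_less k (cardSuc l)))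
    \<and> baire_space (order_topology_on (Xspace k (cardSuc l)) (lex_less k (cardSuc l)))
    \<and> non_archimedean (order_topology_on (Xspace k (cardSuc l)) (lex_less k (cardSuc l)))
    \<and> hereditarily_paracompact (order_topology_on (Xspace k (cardSuc l)) (lex_less k (cardSuc l)))
    \<and> dis_le (order_topology_on (Xspace k (cardSuc l)) (lex_less k (cardSuc l))) (Field (cardSuc l))
    \<and> (cardSuc l, k) \<in> ordLess
    \<and> Delta_gt (order_topology_on (Xspace k (cardSuc l)) (lex_less k (cardSuc l))) (Field k)"
proof -
  have LC: "Card_order (cardSuc l)" using cardSuc_Card_order assms(3) by blast
  have LW: "Well_order (cardSuc l)" using LC unfolding card_order_on_def by blast
  have Linf: "infinite (Field (cardSuc l))" using cardSuc_finite[OF assms(3)] assms(4) by simp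
  have Lne: "Field (cardSuc l) \<noteq> {}" using Linf by auto
  have Lbnd: "\<exists>\<eta>\<in>Field (cardSuc l). \<forall>t\<in>T. (t,\<eta>) \<in> cardSuc l \<and> t \<noteq> \<eta>"
    if "T \<subseteq> Field (cardSuc l)" "countable T" for T
    using bounded_small[OF assms(3,4) that(1) countable_small[OF that(2) assms(4)]] .
  interpret LX k "cardSuc l"
    by (unfold_locales) (use assms(1,2) LW Lbnd Lne in auto)
  have D: "Delta_gt T (Field k)"
  proof (rule Delta, intro ballI)
    fix \<delta> assume d: "\<delta> \<in> Field (cardSuc l)"
    obtain S where S: "cofinal_in k S" "|S| \<le>o |Field l|" using assms(5) unfolding cf_le_def by blast
    define R where "R = Field (cardSuc l) - under (cardSuc l) \<delta>"
    have "\<not> |R| \<le>o |Field l|"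
    proof
      assume R: "|R| \<le>o |Field l|"
      have U: "|under (cardSuc l) \<delta>| \<le>o |Field l|" using under_small[OF assms(3,4) d] .
      have "|R \<union> under (cardSuc l) \<delta>| \<le>o |Field l|"
        using card_of_Un_ordLeq_infinite_Field[of "|Field l|", OF _ R U card_of_Card_order] assms(4)
        by (simp add: Field_card_of)
      moreover have "Field (cardSuc l) \<subseteq> R \<union> under (cardSuc l) \<delta>" unfolding R_def by blast
      ultimately have "|Field (cardSuc l)| \<le>o |Field l|" using card_of_mono1 ordLeq_transitive by blast
      thus False using Field_cardSuc_big[OF assms(3)] by blast
    qed
    hence "|Field l| <o |R|" using not_ordLeq_iff_ordLess[OF card_of_Well_order[of "Field l"] card_of_Well_order[of R]] by simp
    hence "|S| \<le>o |R|" using S(2) ordLeq_ordLess_trans ordLess_imp_ordLeq by blast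
    then obtain e where e: "inj_on e S" "e ` S \<subseteq> R" using card_of_ordLeq[of S R] by blast
    have eF: "e ` S \<subseteq> Field (cardSuc l)" using e(2) unfolding R_def by blast
    have above: "\<forall>s\<in>S. (\<delta>, e s) \<in> cardSuc l \<and> \<delta> \<noteq> e s"
    proof
      fix s assume s: "s \<in> S"
      hence es: "e s \<in> Field (cardSuc l)" "(e s, \<delta>) \<notin> cardSuc l" using e(2) unfolding R_def under_def by auto
      have "(\<delta>, e s) \<in> cardSuc l" using WO_tot[OF LW d es(1)] es(2) by blast
      moreover have "\<delta> \<noteq> e s" using es(2) WO_refl[OF LW d] by blast
      ultimately show "(\<delta>, e s) \<in> cardSuc l \<and> \<delta> \<noteq> e s" by blast
    qed
    have "|e ` S| \<le>o |Field l|" using card_of_image[of e S] S(2) ordLeq_transitive by blast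
    then obtain \<eta> where eta: "\<eta> \<in> Field (cardSuc l)" "\<forall>t\<in>e ` S. (t,\<eta>) \<in> cardSuc l \<and> t \<noteq> \<eta>"
      using bounded_small[OF assms(3,4) eF] by blast
    show "\<exists>S e \<eta>. cofinal_in k S \<and> inj_on e S \<and> e ` S \<subseteq> Field (cardSuc l) \<and>
      (\<forall>s\<in>S. (\<delta>, e s) \<in> cardSuc l \<and> \<delta> \<noteq> e s) \<and> \<eta> \<in> Field (cardSuc l) \<and>
      (\<forall>s\<in>S. (e s, \<eta>) \<in> cardSuc l \<and> e s \<noteq> \<eta>)"
      using S(1) e(1) eF above eta by blast
  qed
  show ?thesis
    using strict_lin choquet baire nonarch hpara dis
      cardSuc_less[OF assms(1,3,4,5,6)] D by blast
qed


end
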